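(* Let $f$ be an arithmetical function and let $g(n)=\sum_{d\mid n} f(d)$ for $n\ge 1$. Then for every integer $n\ge 1$, \[ \sum_{k=1}^{n} g(k)\,\omega(n-k)=\sum_{\substack{m+k=n\\ m\ge 1,\ k\ge 0}} f(m)\,\Omega_m(k). \]
   Context: $\omega:\mathbb{Z}\to\mathbb{Z}$ is defined by $\omega(0)=1$; $\omega(m)=(-1)^j$ if $m=\frac{3j^2+j}{2}$ or $m=\frac{3j^2-j}{2}$ for some integer $j\ge 1$; and $\omega(m)=0$ otherwise (in particular $\omega(m)=0$ for $m<0$). Thus $\prod_{n\ge1}(1-q^n)=\sum_{m\ge0}\omega(m)q^m$ (Euler's pentagonal number theorem). For integers $m\ge 1$ and $k$, $\Omega_m(k)=\sum_{j\ge 0}\omega(k-jm)=\omega(k)+\omega(k-m)+\omega(k-2m)+\cdots$ (a finite sum). *)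

theory Defs
  imports Complex_Main
begin

definition omega :: "int \<Rightarrow> int" where
  "omega m = (if m = 0 then 1
     else if (\<exists>j::int. j \<ge> 1 \<and> (m = (3*j^2 + j) div 2 \<or> m = (3*j^2 - j) div 2))
       then (-1) ^ nat (THE j::int. j \<ge> 1 \<and> (m = (3*j^2 + j) div 2 \<or> m = (3*j^2 - j) div 2))
       else 0)"

text \<open>Omega_m(k) = omega(k) + omega(k-m) + omega(k-2m) + ... (terms with negative
  argument vanish, so the sum over j with j*m \<le> k suffices; empty for k < 0).\<close>
definition Omega :: "nat \<Rightarrow> int \<Rightarrow> int" where
  "Omega m k = (\<Sum>j\<in>{j::nat. int (j*m) \<le> k}. omega (k - int (j*m)))"

end

theory Submission
  imports Defs
begin

lemma inner_eq:
  fixes w :: "int \<Rightarrow> int"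
  assumes d: "d \<ge> 1" "d \<le> n"
  shows "(\<Sum>j\<in>{j::nat. int (j*d) \<le> int (n - d)}. w (int (n - d) - int (j*d)))
       = (\<Sum>k\<in>{k\<in>{1..n}. d dvd k}. w (int n - int k))"
proof (rule sum.reindex_bij_witness[where i="\<lambda>k. k div d - 1" and j="\<lambda>j. (j+1)*d"])
  fix a assume a: "a \<in> {k\<in>{1..n}. d dvd k}"
  then obtain c where c: "a = d*c" by auto
  with a d have "c \<ge> 1" by (cases c) auto
  with c d show "(a div d - 1 + 1) * d = a" by simp
  have "(c - 1) * d \<le> n - d" using c d a \<open>c\<ge>1\<close>
    by (cases c) (auto simp: algebra_simps)
  moreover have "a div d = c" using c d by simp
  ultimately show "a div d - 1 \<in> {j. int ((j) * d) \<le> int (n - d)}"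
    by (simp only: mem_Collect_eq of_nat_le_iff)
next
  fix b assume b: "b \<in> {j::nat. int (j*d) \<le> int (n - d)}"
  from d show "((b + 1) * d) div d - 1 = b" by simp
  from b have "b*d \<le> n-d" by (simp only: mem_Collect_eq of_nat_le_iff)
  with d show "(b + 1) * d \<in> {k\<in>{1..n}. d dvd k}" by auto
  from b d show "w (int n - int ((b + 1) * d)) = w (int (n - d) - int (b * d))"
    by (simp add: algebra_simps of_nat_diff)
qed

theorem theorem1:
  fixes f :: "nat \<Rightarrow> complex" and n :: nat
  assumes "n \<ge> 1"
  shows "(\<Sum>k=1..n. (\<Sum>d | d dvd k. f d) * of_int (omega (int n - int k)))
       = (\<Sum>m=1..n. f m * of_int (Omega m (int (n - m))))"
proof -
  let ?w = "\<lambda>k. of_int (omega (int n - int k)) :: complex"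
  have "(\<Sum>k=1..n. (\<Sum>d | d dvd k. f d) * ?w k)
      = (\<Sum>k=1..n. \<Sum>d=1..n. (if d dvd k then f d * ?w k else 0))"
  proof (rule sum.cong[OF refl])
    fix k assume k: "k \<in> {1..n}"
    have "{d. d dvd k} = {d\<in>{1..n}. d dvd k}"
      using k by (auto dest: dvd_imp_le intro: Nat.gr0I)
    then have "(\<Sum>d | d dvd k. f d) * ?w k = (\<Sum>d\<in>{d\<in>{1..n}. d dvd k}. f d * ?w k)"
      by (simp add: sum_distrib_right)
    also have "\<dots> = (\<Sum>d=1..n. (if d dvd k then f d * ?w k else 0))"
      by (rule sum.inter_filter) simp
    finally show "(\<Sum>d | d dvd k. f d) * ?w k = (\<Sum>d=1..n. (if d dvd k then f d * ?w k else 0))" .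
  qed
  also have "\<dots> = (\<Sum>d=1..n. \<Sum>k=1..n. (if d dvd k then f d * ?w k else 0))"
    by (rule sum.swap)
  also have "\<dots> = (\<Sum>d=1..n. f d * (\<Sum>k\<in>{k\<in>{1..n}. d dvd k}. ?w k))"
  proof (rule sum.cong[OF refl])
    fix d
    have "(\<Sum>k=1..n. (if d dvd k then f d * ?w k else 0)) = (\<Sum>k\<in>{k\<in>{1..n}. d dvd k}. f d * ?w k)"
      by (rule sum.inter_filter[symmetric]) simp
    then show "(\<Sum>k=1..n. (if d dvd k then f d * ?w k else 0)) = f d * (\<Sum>k\<in>{k\<in>{1..n}. d dvd k}. ?w k)"
      by (simp only: sum_distrib_left)
  qed
  also have "\<dots> = (\<Sum>m=1..n. f m * of_int (Omega m (int (n - m))))"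
  proof (rule sum.cong[OF refl])
    fix d assume d: "d \<in> {1..n}"
    have "Omega d (int (n - d)) = (\<Sum>k\<in>{k\<in>{1..n}. d dvd k}. omega (int n - int k))"
      unfolding Omega_def using d by (intro inner_eq) auto
    then show "f d * (\<Sum>k\<in>{k\<in>{1..n}. d dvd k}. ?w k) = f d * of_int (Omega d (int (n - d)))"
      by simp
  qed
  finally show ?thesis .
qed

end
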